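(* Let $R$ be a nonabelian group whose order is a product of two distinct primes, and let $S\subseteq R$. If $\mathrm{Cay}(R,S)$ is a nontrivial generalised wreath product, then $\mathrm{Aut}(R)_S>1$.
   Context: $\mathrm{Aut}(R)_S$ is the group of automorphisms of $R$ fixing $S$ setwise. $\mathrm{Cay}(R,S)$ (vertex set $R$, arcs $r\to sr$ for $s\in S$) is a nontrivial generalised wreath product if there exist subgroups $K,H$ with $1<K\trianglelefteq H<R$ and $K(S\setminus H)=S\setminus H=(S\setminus H)K$. *)

theory Defs
  imports "HOL-Algebra.Algebra"
begin

text \<open>Automorphisms are elements of iso R R;
  they are compared on the carrier only (values outside carrier are irrelevant).
  The group Aut(R)_S is nontrivial iff it contains an automorphism that is not the
  identity on carrier R.\<close>
definition Aut_stab_nontrivial :: "('a, 'b) monoid_scheme \<Rightarrow> 'a set \<Rightarrow> bool" where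
  "Aut_stab_nontrivial R S \<longleftrightarrow>
     (\<exists>\<phi> \<in> iso R R. \<phi> ` S = S \<and> (\<exists>x \<in> carrier R. \<phi> x \<noteq> x))"

definition nontrivial_gen_wreath :: "('a, 'b) monoid_scheme \<Rightarrow> 'a set \<Rightarrow> bool" where
  "nontrivial_gen_wreath R S \<longleftrightarrow>
     (\<exists>K H. subgroup H R \<and> H \<noteq> carrier R \<and> K \<subseteq> H \<and>
        K \<lhd> (R\<lparr>carrier := H\<rparr>) \<and> K \<noteq> {\<one>\<^bsub>R\<^esub>} \<and>
        K <#>\<^bsub>R\<^esub> (S - H) = S - H \<and> (S - H) <#>\<^bsub>R\<^esub> K = S - H)"

end

theory Submission
  imports Defs
begin

lemma divisors_pq:
  fixes p q d :: nat
  assumes "Factorial_Ring.prime p" "Factorial_Ring.prime q" "d dvd p * q"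
  shows "d = 1 \<or> d = p \<or> d = q \<or> d = p * q"
proof -
  obtain a b where ab: "d = a * b" "a dvd p" "b dvd q"
    using division_decomp[OF assms(3)] by blast
  have "a = 1 \<or> a = p" using ab(2) assms(1) prime_nat_iff by blast
  moreover have "b = 1 \<or> b = q" using ab(3) assms(2) prime_nat_iff by blast
  ultimately show ?thesis using ab(1) by auto
qed

lemma (in group) card_subgroup_dvd:
  assumes "subgroup I G" "subgroup J G" "I \<subseteq> J"
  shows "card I dvd card J"
proof -
  have g: "group (G\<lparr>carrier := J\<rparr>)" using subgroup_imp_group assms(2) .
  have s: "subgroup I (G\<lparr>carrier := J\<rparr>)" using subgroup_incl assms .
  have "card (rcosets\<^bsub>G\<lparr>carrier := J\<rparr>\<^esub> I) * card I = order (G\<lparr>carrier := J\<rparr>)"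
    using group.lagrange[OF g s] .
  then show ?thesis unfolding order_def by (metis dvd_triv_right partial_object.select_convs(1) partial_object.surjective partial_object.update_convs(1))
qed

definition centr :: "('a, 'b) monoid_scheme \<Rightarrow> 'a \<Rightarrow> 'a set" where
  "centr G x = {y \<in> carrier G. y \<otimes>\<^bsub>G\<^esub> x = x \<otimes>\<^bsub>G\<^esub> y}"

lemma (in group) centr_subgroup:
  assumes "x \<in> carrier G"
  shows "subgroup (centr G x) G"
proof (rule subgroupI)
  show "centr G x \<subseteq> carrier G" unfolding centr_def by auto
  show "centr G x \<noteq> {}" using assms unfolding centr_def by (auto intro!: exI[of _ \<one>])
next
  fix a assume a: "a \<in> centr G x"
  then have ac: "a \<in> carrier G" and e: "a \<otimes> x = x \<otimes> a" unfolding centr_def by auto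
  have "inv a \<otimes> x = inv a \<otimes> (x \<otimes> a) \<otimes> inv a"
    using ac assms by (simp add: m_assoc)
  also have "\<dots> = inv a \<otimes> (a \<otimes> x) \<otimes> inv a" using e by simp
  also have "\<dots> = x \<otimes> inv a" using ac assms by (simp add: m_assoc[symmetric])
  finally show "inv a \<in> centr G x" using ac unfolding centr_def by auto
next
  fix a b assume "a \<in> centr G x" "b \<in> centr G x"
  then have ac: "a \<in> carrier G" "b \<in> carrier G" and e: "a \<otimes> x = x \<otimes> a" "b \<otimes> x = x \<otimes> b"
    unfolding centr_def by auto
  have "a \<otimes> b \<otimes> x = a \<otimes> (x \<otimes> b)" using ac assms e by (simp add: m_assoc)
  also have "\<dots> = x \<otimes> (a \<otimes> b)" using ac assms e by (simp add: m_assoc[symmetric])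
  finally show "a \<otimes> b \<in> centr G x" using ac unfolding centr_def by auto
qed

definition centre :: "('a, 'b) monoid_scheme \<Rightarrow> 'a set" where
  "centre G = {y \<in> carrier G. \<forall>x \<in> carrier G. y \<otimes>\<^bsub>G\<^esub> x = x \<otimes>\<^bsub>G\<^esub> y}"

lemma (in group) centre_subgroup: "subgroup (centre G) G"
proof -
  have "centre G = \<Inter> ((centr G) ` carrier G)"
    unfolding centre_def centr_def by auto
  moreover have "subgroup (\<Inter> ((centr G) ` carrier G)) G"
    by (rule subgroups_Inter) (auto intro: centr_subgroup)
  ultimately show ?thesis by simp
qed

lemma card_ge2:
  assumes "finite A" "a \<in> A" "b \<in> A" "a \<noteq> b"
  shows "2 \<le> card A"
proof -
  have "card {a, b} \<le> card A" using assms by (intro card_mono) auto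
  then show ?thesis using assms by simp
qed

lemma (in group) main_lemma:
  fixes S :: "'a set" and p q :: nat
  assumes "\<not> comm_group G"
    and "finite (carrier G)"
    and "Factorial_Ring.prime p" and "Factorial_Ring.prime q" and "p \<noteq> q"
    and "order G = p * q"
    and "S \<subseteq> carrier G"
    and "nontrivial_gen_wreath G S"
  shows "Aut_stab_nontrivial G S"
proof -
  note pp = assms(3) and qp = assms(4)
  have p2: "p \<ge> 2" "q \<ge> 2" using pp qp prime_ge_2_nat by auto
  have fin: "finite (carrier G)" by fact
  have cardG: "card (carrier G) = p * q" using assms(6) unfolding order_def .
  obtain K H where H: "subgroup H G" "H \<noteq> carrier G" "K \<subseteq> H"
    and Kn: "K \<lhd> (G\<lparr>carrier := H\<rparr>)" and K1: "K \<noteq> {\<one>}"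
    and KL: "K <#> (S - H) = S - H" and KG: "(S - H) <#> K = S - H"
    using assms(8) unfolding nontrivial_gen_wreath_def by blast
  have Ksub: "subgroup K (G\<lparr>carrier := H\<rparr>)" using Kn unfolding normal_def by auto
  have Kone: "\<one> \<in> K" using subgroup.one_closed[OF Ksub] by simp
  have Kinv: "inv g \<in> K" if "g \<in> K" for g
  proof -
    have "inv\<^bsub>G\<lparr>carrier := H\<rparr>\<^esub> g \<in> K" using subgroup.m_inv_closed[OF Ksub that] .
    then show ?thesis using m_inv_consistent[OF H(1)] that H(3) by auto
  qed
  obtain k where k: "k \<in> K" "k \<noteq> \<one>" using K1 Kone by blast
  have kH: "k \<in> H" using k H(3) by auto
  have kc: "k \<in> carrier G" using kH subgroup.subset[OF H(1)] by auto
  have Hc: "H \<subseteq> carrier G" using subgroup.subset[OF H(1)] .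
  have Kc: "K \<subseteq> carrier G" using H(3) Hc by auto
  have finH: "finite H" using Hc fin finite_subset by blast
  have cHd: "card H dvd p * q"
    using card_subgroup_dvd[OF H(1) subgroup_self Hc] cardG by simp
  have cHne: "card H \<noteq> p * q"
  proof
    assume "card H = p * q"
    then have "H = carrier G" using card_subset_eq[OF fin Hc] cardG by simp
    then show False using H(2) by simp
  qed
  have cH2: "2 \<le> card H"
    using card_ge2[OF finH kH subgroup.one_closed[OF H(1)] k(2)] .
  have cHp: "Factorial_Ring.prime (card H)"
    using divisors_pq[OF pp qp cHd] cHne cH2 pp qp by auto
  have HC: "H \<subseteq> centr G g" if gH: "g \<in> H" for g
  proof (cases "g = \<one>")
    case True
    then show ?thesis using Hc unfolding centr_def by auto
  next
    case False
    have gc: "g \<in> carrier G" using gH Hc by auto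
    have s: "subgroup (centr G g \<inter> H) G"
      by (intro subgroups_Inter_pair centr_subgroup gc H(1))
    have d: "card (centr G g \<inter> H) dvd card H"
      using card_subgroup_dvd[OF s H(1)] by auto
    have "g \<in> centr G g \<inter> H" "\<one> \<in> centr G g \<inter> H"
      using gc gH subgroup.one_closed[OF H(1)] unfolding centr_def by auto
    then have "2 \<le> card (centr G g \<inter> H)"
      using card_ge2[of "centr G g \<inter> H" g \<one>] False finH by auto
    then have "card (centr G g \<inter> H) = card H"
      using d cHp prime_nat_iff by auto
    then have "centr G g \<inter> H = H"
      using card_subset_eq[OF finH] by auto
    then show ?thesis by auto
  qed
  have conjS: "g \<otimes> s \<otimes> inv g \<in> S" if g: "g \<in> K" and s: "s \<in> S" for g s
  proof (cases "s \<in> H")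
    case True
    have gc: "g \<in> carrier G" using g Kc by auto
    have sc: "s \<in> carrier G" using s assms(7) by auto
    have "s \<in> centr G g" using HC[of g] g H(3) True by auto
    then have "g \<otimes> s = s \<otimes> g" unfolding centr_def by auto
    then show ?thesis using gc sc s by (simp add: m_assoc)
  next
    case False
    have gc: "g \<in> carrier G" using g Kc by auto
    have "g \<otimes> s \<in> K <#> (S - H)" unfolding set_mult_def using g s False by auto
    then have "g \<otimes> s \<in> S - H" using KL by simp
    then have "g \<otimes> s \<otimes> inv g \<in> (S - H) <#> K" unfolding set_mult_def using Kinv[OF g] by auto
    then show ?thesis using KG by simp
  qed
  have Zsub: "subgroup (centre G) G" by (rule centre_subgroup)
  have Zc: "centre G \<subseteq> carrier G" unfolding centre_def by auto
  have finZ: "finite (centre G)" using Zc fin finite_subset by blast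
  have notcentral: "k \<notin> centre G"
  proof
    assume kZ: "k \<in> centre G"
    have cZd: "card (centre G) dvd p * q"
      using card_subgroup_dvd[OF Zsub subgroup_self Zc] cardG by simp
    have "\<one> \<in> centre G" unfolding centre_def by auto
    then have cZ2: "2 \<le> card (centre G)" using card_ge2[OF finZ kZ _ k(2)] by auto
    have allZ: "x \<in> centre G" if xc: "x \<in> carrier G" for x
    proof (rule ccontr)
      assume xZ: "x \<notin> centre G"
      have Cs: "subgroup (centr G x) G" using centr_subgroup[OF xc] .
      have Cc: "centr G x \<subseteq> carrier G" unfolding centr_def by auto
      have ZC: "centre G \<subseteq> centr G x" using xc unfolding centre_def centr_def by auto
      have xC: "x \<in> centr G x" using xc unfolding centr_def by auto
      have ps: "centre G \<subset> centr G x" using ZC xC xZ by auto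
      have lt: "card (centre G) < card (centr G x)"
        using psubset_card_mono[OF finite_subset[OF Cc fin] ps] .
      have d1: "card (centre G) dvd card (centr G x)"
        using card_subgroup_dvd[OF Zsub Cs ZC] .
      have d2: "card (centr G x) dvd p * q"
        using card_subgroup_dvd[OF Cs subgroup_self Cc] cardG by simp
      have "card (centr G x) = p * q"
      proof -
        have A: "card (centre G) = p \<or> card (centre G) = q \<or> card (centre G) = p * q"
          using divisors_pq[OF pp qp cZd] cZ2 by auto
        have B: "card (centr G x) = 1 \<or> card (centr G x) = p \<or> card (centr G x) = q \<or> card (centr G x) = p * q"
          using divisors_pq[OF pp qp d2] .
        have npq: "\<not> p dvd q" "\<not> q dvd p"
          using pp qp assms(5) primes_dvd_imp_eq by blast+
        show ?thesis using A B lt d1 npq by auto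
      qed
      then have "centr G x = carrier G"
        using card_subset_eq[OF fin Cc] cardG by simp
      then have "\<forall>y \<in> carrier G. y \<otimes> x = x \<otimes> y" unfolding centr_def by auto
      then have "x \<in> centre G" using xc unfolding centre_def by auto
      then show False using xZ by simp
    qed
    have "comm_group G"
    proof (rule group_comm_groupI)
      fix x y assume "x \<in> carrier G" "y \<in> carrier G"
      then show "x \<otimes> y = y \<otimes> x" using allZ unfolding centre_def by auto
    qed
    then show False using assms(1) by simp
  qed
  define \<phi> where "\<phi> = (\<lambda>x. k \<otimes> x \<otimes> inv k)"
  have hom: "\<phi> \<in> hom G G"
  proof -
    have "k \<otimes> (x \<otimes> y) \<otimes> inv k = k \<otimes> x \<otimes> inv k \<otimes> (k \<otimes> y \<otimes> inv k)"
      if "x \<in> carrier G" "y \<in> carrier G" for x y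
    proof -
      have "k \<otimes> x \<otimes> inv k \<otimes> (k \<otimes> y \<otimes> inv k) = k \<otimes> x \<otimes> (inv k \<otimes> k) \<otimes> y \<otimes> inv k"
        using that kc by (simp only: m_assoc m_closed inv_closed)
      also have "\<dots> = k \<otimes> (x \<otimes> y) \<otimes> inv k" using that kc by (simp add: m_assoc)
      finally show ?thesis by simp
    qed
    then show ?thesis unfolding hom_def \<phi>_def using kc by auto
  qed
  have bij: "bij_betw \<phi> (carrier G) (carrier G)"
  proof -
    have "bij_betw (\<lambda>h \<in> carrier G. k \<otimes> h \<otimes> inv k) (carrier G) (carrier G)"
      using conjugation_is_bij[OF kc] .
    then show ?thesis unfolding \<phi>_def by (rule bij_betw_cong[THEN iffD1, rotated]) auto
  qed
  have iso: "\<phi> \<in> iso G G" using hom bij unfolding iso_def by auto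
  have img: "\<phi> ` S = S"
  proof
    show "\<phi> ` S \<subseteq> S" unfolding \<phi>_def using conjS[OF k(1)] by auto
    show "S \<subseteq> \<phi> ` S"
    proof
      fix s assume s: "s \<in> S"
      have sc: "s \<in> carrier G" using s assms(7) by auto
      have "inv k \<otimes> s \<otimes> inv (inv k) \<in> S" using conjS[OF Kinv[OF k(1)] s] .
      then have t: "inv k \<otimes> s \<otimes> k \<in> S" using kc by simp
      have "\<phi> (inv k \<otimes> s \<otimes> k) = s" unfolding \<phi>_def using kc sc
        by (simp add: m_assoc) (metis inv_closed m_assoc r_inv l_one)
      then show "s \<in> \<phi> ` S" using t by force
    qed
  qed
  have nt: "\<exists>x \<in> carrier G. \<phi> x \<noteq> x"
  proof (rule ccontr)
    assume "\<not> (\<exists>x \<in> carrier G. \<phi> x \<noteq> x)"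
    then have fx: "\<And>x. x \<in> carrier G \<Longrightarrow> k \<otimes> x \<otimes> inv k = x" unfolding \<phi>_def by auto
    have "k \<in> centre G"
      unfolding centre_def
    proof (intro CollectI conjI ballI kc)
      fix x assume xc: "x \<in> carrier G"
      have "k \<otimes> x = k \<otimes> x \<otimes> inv k \<otimes> k" using kc xc by (simp add: m_assoc)
      also have "\<dots> = x \<otimes> k" using fx[OF xc] by simp
      finally show "k \<otimes> x = x \<otimes> k" .
    qed
    then show False using notcentral by simp
  qed
  show ?thesis unfolding Aut_stab_nontrivial_def using iso img nt by blast
qed


theorem corollary4p8:
  fixes R :: "('a, 'b) monoid_scheme" and S :: "'a set" and p q :: nat
  assumes "group R"
    and "\<not> comm_group R"
    and "finite (carrier R)"
    and "Factorial_Ring.prime p" and "Factorial_Ring.prime q" and "p \<noteq> q"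
    and "order R = p * q"
    and "S \<subseteq> carrier R"
    and "nontrivial_gen_wreath R S"
  shows "Aut_stab_nontrivial R S"
  using group.main_lemma[OF assms(1)] assms(2-9) by blast

end
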